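(* $\{1,2,4\}\in\mathcal{I}\setminus\mathcal{I}_1$.
   Context: For a summable sequence $\mathbf{x}=(x_n)$ of positive reals, $\mathcal{A}(\mathbf{x})=\{\sum_{n\in A}x_n: A\subseteq\mathbb{N}\}$ is its achievement set and its cardinal function $f$ assigns to $x\in\mathcal{A}(\mathbf{x})$ the cardinality (a positive integer, $\omega$, or $\mathfrak{c}$) of $\{(\varepsilon_n)\in\{0,1\}^{\mathbb{N}}:\sum\varepsilon_nx_n=x\}$. $\mathcal{I}$ is the family of ranges of cardinal functions of such sequences whose achievement set is a finite union of (nondegenerate) closed intervals; $\mathcal{I}_1$ is the family of ranges of cardinal functions of such sequences whose achievement set is a single closed interval. *)

theory Defs
  imports "HOL-Analysis.Analysis"
begin

datatype cval = CFin nat | COmega | CCont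

definition cardval :: "'a set \<Rightarrow> cval" where
  "cardval S = (if finite S then CFin (card S) else if countable S then COmega else CCont)"

text \<open>Subset sum for the set of indices A (i.e. the 0-1 sequence given by indicator of A).\<close>
definition subsum :: "(nat \<Rightarrow> real) \<Rightarrow> nat set \<Rightarrow> real" where
  "subsum x A = (\<Sum>n. if n \<in> A then x n else 0)"

definition achievement_set :: "(nat \<Rightarrow> real) \<Rightarrow> real set" where
  "achievement_set x = {subsum x A | A. True}"

definition cardinal_function :: "(nat \<Rightarrow> real) \<Rightarrow> real \<Rightarrow> cval" where
  "cardinal_function x y = cardval {A :: nat set. subsum x A = y}"

definition cf_range :: "(nat \<Rightarrow> real) \<Rightarrow> cval set" where
  "cf_range x = cardinal_function x ` achievement_set x"

definition admissible_seq :: "(nat \<Rightarrow> real) \<Rightarrow> bool" where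
  "admissible_seq x \<longleftrightarrow> (\<forall>n. x n > 0) \<and> summable x"

definition finite_union_intervals :: "real set \<Rightarrow> bool" where
  "finite_union_intervals S \<longleftrightarrow>
     (\<exists>F. finite F \<and> F \<noteq> {} \<and> (\<forall>(a,b)\<in>F. a < b) \<and> S = (\<Union>(a,b)\<in>F. {a..b}))"

definition family_I :: "cval set set" where
  "family_I = {cf_range x | x. admissible_seq x \<and> finite_union_intervals (achievement_set x)}"

definition family_I1 :: "cval set set" where
  "family_I1 = {cf_range x | x. admissible_seq x \<and> (\<exists>a b. a < b \<and> achievement_set x = {a..b})}"

end

theory Submission
  imports Defs
begin


definition pss :: "(nat \<Rightarrow> real) \<Rightarrow> bool" where
  "pss y \<longleftrightarrow> (\<forall>n. y n > 0) \<and> summable y"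

lemma pss_pos: "pss y \<Longrightarrow> y n > 0" by (simp add: pss_def)

lemma pss_summable_on: "pss y \<Longrightarrow> y summable_on B"
proof -
  assume p: "pss y"
  hence "y summable_on UNIV" using summable_on_UNIV_nonneg_real_iff[of y]
    by (simp add: pss_def less_imp_le)
  thus ?thesis using summable_on_subset by blast
qed

lemma subsum_infsum:
  assumes "pss y" shows "subsum y B = infsum y B"
proof -
  define g where "g n = (if n \<in> B then y n else 0)" for n
  have g0: "g n \<ge> 0" for n using pss_pos[OF assms] by (simp add: g_def less_imp_le)
  have "summable g"
    by (rule summable_comparison_test[of _ y]) (use assms g0 in \<open>auto simp: g_def pss_def less_imp_le\<close>)
  hence "(g has_sum suminf g) UNIV"
    using sums_nonneg_imp_has_sum g0 summable_sums by blast
  hence "(y has_sum suminf g) B"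
    by (subst has_sum_cong_neutral[where g=g and T=UNIV]) (auto simp: g_def)
  thus ?thesis unfolding subsum_def g_def[symmetric] by (metis infsumI)
qed

lemma ss_Un:
  assumes "pss y" "A \<inter> B = {}" shows "infsum y (A \<union> B) = infsum y A + infsum y B"
  using infsum_Un_disjoint pss_summable_on[OF assms(1)] assms(2) by blast

lemma ss_nonneg: "pss y \<Longrightarrow> infsum y A \<ge> 0"
  by (rule infsum_nonneg) (simp add: pss_def less_imp_le)

lemma ss_mono:
  assumes "pss y" "A \<subseteq> B" shows "infsum y A \<le> infsum y B"
  by (rule infsum_mono2) (use assms pss_summable_on in \<open>auto simp: pss_def less_imp_le\<close>)

lemma ss_ge_elem:
  assumes "pss y" "i \<in> A" shows "infsum y A \<ge> y i"
  using ss_mono[OF assms(1), of "{i}" A] assms by simp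

lemma ss_strict:
  assumes "pss y" "A \<subseteq> B" "i \<in> B" "i \<notin> A" shows "infsum y A < infsum y B"
proof -
  have "B = A \<union> (B - A)" using assms by auto
  hence "infsum y B = infsum y A + infsum y (B - A)" using ss_Un[OF assms(1)] by (metis Diff_disjoint)
  moreover have "infsum y (B - A) \<ge> y i" using ss_ge_elem[OF assms(1)] assms by auto
  moreover have "y i > 0" using pss_pos[OF assms(1)] .
  ultimately show ?thesis by linarith
qed

lemma ss_pos: "pss y \<Longrightarrow> A \<noteq> {} \<Longrightarrow> infsum y A > 0"
proof -
  assume p: "pss y" and "A \<noteq> {}"
  then obtain i where "i \<in> A" by blast
  hence "y i \<le> infsum y A" by (rule ss_ge_elem[OF p])
  moreover have "y i > 0" by (rule pss_pos[OF p])
  ultimately show ?thesis by linarith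
qed

lemma ss_zero_iff: "pss y \<Longrightarrow> infsum y A = 0 \<longleftrightarrow> A = {}"
proof -
  assume p: "pss y"
  show ?thesis
  proof
    assume "infsum y A = 0" thus "A = {}" using ss_pos[OF p, of A] by linarith
  qed simp
qed

lemma ss_finite: "finite A \<Longrightarrow> infsum y A = sum y A" by simp

lemma ss_UNIV: "pss y \<Longrightarrow> infsum y UNIV = suminf y"
  using subsum_infsum[of y UNIV] by (simp add: subsum_def)

lemma ss_tail: "pss y \<Longrightarrow> infsum y {m..} = suminf y - sum y {..<m}"
proof -
  assume p: "pss y"
  have u: "UNIV = {..<m} \<union> {m..}" by auto
  have "infsum y ({..<m} \<union> {m..}) = infsum y {..<m} + infsum y {m..}"
    by (rule ss_Un[OF p]) auto
  hence "infsum y UNIV = infsum y {..<m} + infsum y {m..}" by (simp only: u[symmetric])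
  thus ?thesis using ss_UNIV[OF p] by simp
qed

lemma ss_tail_lim: "pss y \<Longrightarrow> (\<lambda>m. infsum y {m..}) \<longlonglongrightarrow> 0"
proof -
  assume p: "pss y"
  have "(\<lambda>m. sum y {..<m}) \<longlonglongrightarrow> suminf y" using p summable_LIMSEQ by (auto simp: pss_def)
  hence "(\<lambda>m. suminf y - sum y {..<m}) \<longlonglongrightarrow> suminf y - suminf y"
    by (intro tendsto_intros)
  thus ?thesis using ss_tail[OF p] by simp
qed

lemma ss_tail_step: "pss y \<Longrightarrow> infsum y {m..} = y m + infsum y {Suc m..}"
proof -
  assume p: "pss y"
  have "{m..} = {m} \<union> {Suc m..}" by auto
  thus ?thesis using ss_Un[OF p, of "{m}" "{Suc m..}"] by auto
qed


lemma sort_exists: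
  fixes x :: "nat \<Rightarrow> real"
  assumes pos: "\<And>n. x n > 0" and lim: "x \<longlonglongrightarrow> 0"
  shows "\<exists>\<sigma>::nat\<Rightarrow>nat. bij \<sigma> \<and> (\<forall>a b. a \<le> b \<longrightarrow> x (\<sigma> b) \<le> x (\<sigma> a))"
proof -
  define prec where "prec i j \<longleftrightarrow> x j < x i \<or> (x i = x j \<and> i < j)" for i j
  define P where "P j = {i. prec i j}" for j
  have finP: "finite (P j)" for j
  proof -
    have "eventually (\<lambda>i. x i < x j) sequentially"
      using order_tendstoD(2)[OF lim pos[of j]] .
    then obtain N where N: "\<And>i. i \<ge> N \<Longrightarrow> x i < x j" unfolding eventually_sequentially by blast
    have "P j \<subseteq> {..<N}"
    proof
      fix i assume "i \<in> P j"
      hence "x j \<le> x i" by (auto simp: P_def prec_def)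
      thus "i \<in> {..<N}" using N[of i] by (cases "i \<ge> N") auto
    qed
    thus ?thesis using finite_subset by blast
  qed
  define rank where "rank j = card (P j)" for j
  have trans: "prec i j \<Longrightarrow> prec j k \<Longrightarrow> prec i k" for i j k
    unfolding prec_def by auto
  have irr: "\<not> prec i i" for i unfolding prec_def by auto
  have tot: "i \<noteq> j \<Longrightarrow> prec i j \<or> prec j i" for i j
    unfolding prec_def by auto
  have mono: "prec i j \<Longrightarrow> rank i < rank j" for i j
  proof -
    assume pij: "prec i j"
    have "P i \<subset> P j"
    proof
      show "P i \<subseteq> P j" using trans pij by (auto simp: P_def)
      show "P i \<noteq> P j" using pij irr by (auto simp: P_def)
    qed
    thus ?thesis unfolding rank_def using psubset_card_mono finP by blast
  qed
  have injr: "inj rank"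
  proof (rule injI)
    fix i j assume "rank i = rank j"
    thus "i = j" using tot[of i j] mono[of i j] mono[of j i] by (cases "i = j") auto
  qed
  have img: "rank ` P j = {..<rank j}" for j
  proof (rule card_subset_eq)
    show "finite {..<rank j}" by simp
    show "rank ` P j \<subseteq> {..<rank j}" using mono by (auto simp: P_def)
    show "card (rank ` P j) = card {..<rank j}"
      using card_image[OF inj_on_subset[OF injr]] by (simp add: rank_def)
  qed
  have surjr: "surj rank"
  proof -
    have inf: "infinite (range rank)" using range_inj_infinite[OF injr] .
    have "r \<in> range rank" for r
    proof -
      have "\<exists>j. rank j > r"
      proof (rule ccontr)
        assume "\<not> ?thesis"
        hence "range rank \<subseteq> {..r}" by (auto simp: not_less)
        thus False using inf finite_subset by blast
      qed
      then obtain j where "rank j > r" by blast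
      hence "r \<in> rank ` P j" using img[of j] by auto
      thus ?thesis by blast
    qed
    thus ?thesis by blast
  qed
  define \<sigma> where "\<sigma> = inv rank"
  have "bij rank" using injr surjr by (simp add: bij_def)
  hence bij: "bij \<sigma>" unfolding \<sigma>_def by (rule bij_imp_bij_inv)
  have rs: "rank (\<sigma> a) = a" for a unfolding \<sigma>_def by (rule surj_f_inv_f[OF surjr])
  have ms: "x (\<sigma> b) \<le> x (\<sigma> a)" if "a \<le> b" for a b
  proof (rule ccontr)
    assume "\<not> ?thesis"
    hence "prec (\<sigma> b) (\<sigma> a)" by (auto simp: prec_def)
    hence "rank (\<sigma> b) < rank (\<sigma> a)" by (rule mono)
    hence "b < a" by (simp only: rs)
    thus False using that by linarith
  qed
  have "bij \<sigma> \<and> (\<forall>a b. a \<le> b \<longrightarrow> x (\<sigma> b) \<le> x (\<sigma> a))" using bij ms by simp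
  thus ?thesis by blast
qed


primrec gp :: "(nat \<Rightarrow> real) \<Rightarrow> nat \<Rightarrow> real \<Rightarrow> nat \<Rightarrow> real" where
  "gp y m z 0 = 0"
| "gp y m z (Suc k) = (if gp y m z k + y (m+k) \<le> z then gp y m z k + y (m+k) else gp y m z k)"

lemma greedy:
  assumes p: "pss y" and kak: "\<And>n. n \<ge> m \<Longrightarrow> y n \<le> infsum y {Suc n..}"
      and z0: "0 \<le> z" and z1: "z \<le> infsum y {m..}"
  shows "\<exists>B. B \<subseteq> {m..} \<and> infsum y B = z"
proof -
  define g where "g = gp y m z"
  define B where "B = {m + k | k. g k + y (m+k) \<le> z}"
  have Bm: "B \<subseteq> {m..}" by (auto simp: B_def)
  have mem: "m + k \<in> B \<longleftrightarrow> g k + y (m+k) \<le> z" for k by (auto simp: B_def)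
  have c1: "g k = sum y (B \<inter> {m..<m+k})" for k
  proof (induction k)
    case 0 show ?case by (simp add: g_def)
  next
    case (Suc k)
    show ?case
    proof (cases "m + k \<in> B")
      case True
      have e: "B \<inter> {m..<m + Suc k} = insert (m+k) (B \<inter> {m..<m+k})" using True by auto
      have "g (Suc k) = g k + y (m+k)" using True mem[of k] by (simp add: g_def)
      thus ?thesis using e Suc.IH by simp
    next
      case False
      have e: "B \<inter> {m..<m + Suc k} = B \<inter> {m..<m+k}" using False by (auto simp: less_Suc_eq)
      have "g (Suc k) = g k" using False mem[of k] by (simp add: g_def)
      thus ?thesis using e Suc.IH by simp
    qed
  qed
  have c3: "z - g k \<le> infsum y {m+k..}" for k
  proof (induction k)
    case 0 show ?case using z1 by (simp add: g_def)
  next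
    case (Suc k)
    have st: "infsum y {m+k..} = y (m+k) + infsum y {Suc (m+k)..}" by (rule ss_tail_step[OF p])
    show ?case
    proof (cases "g k + y (m+k) \<le> z")
      case True
      hence "g (Suc k) = g k + y (m+k)" by (simp add: g_def)
      thus ?thesis using Suc.IH st by simp
    next
      case False
      hence "g (Suc k) = g k" by (simp add: g_def)
      moreover have "y (m+k) \<le> infsum y {Suc (m+k)..}" using kak[of "m+k"] by simp
      ultimately show ?thesis using False by simp
    qed
  qed
  have c2: "g k \<le> z" for k
    by (induction k) (auto simp: g_def z0)
  have Rlim: "(\<lambda>k. infsum y {m+k..}) \<longlonglongrightarrow> 0"
    using LIMSEQ_ignore_initial_segment[OF ss_tail_lim[OF p], of m] by (simp add: add.commute)
  have "(\<lambda>k. z - g k) \<longlonglongrightarrow> 0"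
    by (rule tendsto_sandwich[of "\<lambda>_. 0" _ _ "\<lambda>k. infsum y {m+k..}"])
       (use c2 c3 Rlim in auto)
  hence "(\<lambda>k. z - (z - g k)) \<longlonglongrightarrow> z - 0" by (intro tendsto_intros)
  hence gl: "g \<longlonglongrightarrow> z" by simp
  define h where "h n = (if n \<in> B then y n else 0)" for n
  have "summable h"
    by (rule summable_comparison_test[of _ y]) (use p in \<open>auto simp: h_def pss_def less_imp_le\<close>)
  hence "(\<lambda>n. \<Sum>i<n. h i) \<longlonglongrightarrow> suminf h" by (rule summable_LIMSEQ)
  moreover have "(\<Sum>i<n. h i) = sum y (B \<inter> {..<n})" for n
    using sum.inter_restrict[of "{..<n}" y B] by (simp add: h_def Int_commute)
  ultimately have "(\<lambda>n. sum y (B \<inter> {..<n})) \<longlonglongrightarrow> suminf h" by simp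
  moreover have "suminf h = subsum y B" unfolding subsum_def h_def ..
  ultimately have "(\<lambda>n. sum y (B \<inter> {..<n})) \<longlonglongrightarrow> subsum y B" by simp
  hence "(\<lambda>k. sum y (B \<inter> {..<k + m})) \<longlonglongrightarrow> subsum y B"
    by (rule LIMSEQ_ignore_initial_segment)
  moreover have "sum y (B \<inter> {..<k + m}) = g k" for k
  proof -
    have "B \<inter> {..<k + m} = B \<inter> {m..<m+k}" using Bm by auto
    thus ?thesis using c1 by simp
  qed
  ultimately have "g \<longlonglongrightarrow> subsum y B" by simp
  hence "subsum y B = z" using gl LIMSEQ_unique by blast
  thus ?thesis using Bm subsum_infsum[OF p] by auto
qed

lemma kakeya:
  assumes p: "pss y" and anti: "\<And>a b. a \<le> b \<Longrightarrow> y b \<le> y a"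
    and ach: "\<And>z. 0 \<le> z \<Longrightarrow> z \<le> infsum y UNIV \<Longrightarrow> \<exists>B. infsum y B = z"
  shows "y n \<le> infsum y {Suc n..}"
proof (rule ccontr)
  assume "\<not> ?thesis"
  hence lt: "infsum y {Suc n..} < y n" by simp
  define z where "z = (y n + infsum y {Suc n..}) / 2"
  have R0: "infsum y {Suc n..} \<ge> 0" by (rule ss_nonneg[OF p])
  have "infsum y {n..} \<le> infsum y UNIV" by (rule ss_mono[OF p]) auto
  moreover have "infsum y {n..} = y n + infsum y {Suc n..}" by (rule ss_tail_step[OF p])
  ultimately have "z \<le> infsum y UNIV" using R0 lt by (simp add: z_def)
  moreover have "0 \<le> z" using R0 lt by (simp add: z_def)
  ultimately obtain B where B: "infsum y B = z" using ach by blast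
  show False
  proof (cases "B \<subseteq> {Suc n..}")
    case True
    hence "infsum y B \<le> infsum y {Suc n..}" by (rule ss_mono[OF p])
    thus False using B lt by (simp add: z_def)
  next
    case False
    then obtain k where k0: "k \<in> B" "\<not> Suc n \<le> k" by auto
    hence k: "k \<in> B" "k \<le> n" by auto
    hence "y k \<le> infsum y B" by (intro ss_ge_elem[OF p])
    moreover have "y n \<le> y k" using anti k by blast
    ultimately show False using B lt by (simp add: z_def)
  qed
qed


lemma tailrep:
  assumes p: "pss y" and kak: "\<And>n. y n \<le> infsum y {Suc n..}"
    and "0 \<le> w" "w \<le> infsum y {m..}"
  obtains B where "B \<subseteq> {m..}" "infsum y B = w"
  using greedy[OF p _ assms(3,4)] kak by blast

lemma disj_bounds: "E \<subseteq> {..<a} \<Longrightarrow> G \<subseteq> {b..} \<Longrightarrow> a \<le> (b::nat) \<Longrightarrow> E \<inter> G = {}"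
proof (rule ccontr)
  assume "E \<subseteq> {..<a}" "G \<subseteq> {b..}" "a \<le> b" "E \<inter> G \<noteq> {}"
  then obtain t where "t \<in> E" "t \<in> G" by blast
  hence "t < a" "b \<le> t" using \<open>E \<subseteq> {..<a}\<close> \<open>G \<subseteq> {b..}\<close> by auto
  thus False using \<open>a \<le> b\<close> by simp
qed

lemma ss_fin_Un:
  assumes p: "pss y" and "finite E" "E \<inter> C = {}"
  shows "infsum y (E \<union> C) = sum y E + infsum y C"
  using ss_Un[OF p assms(3)] assms(2) by simp

lemma nested:
  assumes p: "pss y" and kak: "\<And>n. y n \<le> infsum y {Suc n..}"
    and inf: "\<And>M. \<exists>n\<ge>M. y n < infsum y {Suc n..}"
  shows "E \<subseteq> {..<m} \<Longrightarrow> u < v \<Longrightarrow>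
     (\<And>w. u \<le> w \<Longrightarrow> w \<le> v \<Longrightarrow> sum y E \<le> w \<and> w \<le> sum y E + infsum y {m..}) \<Longrightarrow>
     \<exists>z. u \<le> z \<and> z \<le> v \<and> (\<exists>Bs. Suc k \<le> card Bs \<and> (\<forall>B\<in>Bs. infsum y B = z \<and> B \<inter> {..<m} = E))"
proof (induction k arbitrary: E m u v)
  case 0
  have finE: "finite E" using 0(1) finite_subset by blast
  have "sum y E \<le> u \<and> u \<le> sum y E + infsum y {m..}" using 0(3)[of u] 0(2) by auto
  then obtain C where C: "C \<subseteq> {m..}" "infsum y C = u - sum y E"
    using tailrep[OF p kak, of "u - sum y E" m] by auto
  have disj: "E \<inter> C = {}"
  proof (rule ccontr)
    assume "E \<inter> C \<noteq> {}"
    then obtain t where "t \<in> E" "t \<in> C" by blast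
    hence "t < m" "m \<le> t" using 0(1) C(1) by auto
    thus False by simp
  qed
  have s: "infsum y (E \<union> C) = u" using ss_fin_Un[OF p finE disj] C(2) by simp
  have r: "(E \<union> C) \<inter> {..<m} = E" using 0(1) C(1) by (auto simp: subset_iff)
  show ?case
    by (rule exI[of _ u], rule conjI, simp, rule conjI, use 0(2) in simp)
       (rule exI[of _ "{E \<union> C}"], use s r in simp)
next
  case (Suc k)
  note prems = Suc.prems
  have finE: "finite E" using prems(1) finite_subset by blast
  define R where "R n = infsum y {n..}" for n
  have Rstep: "R n = y n + R (Suc n)" for n unfolding R_def by (rule ss_tail_step[OF p])
  have Rmono: "i \<le> j \<Longrightarrow> R j \<le> R i" for i j unfolding R_def by (rule ss_mono[OF p]) auto
  have ypos: "y n > 0" for n using pss_pos[OF p] .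
  have hpos: "(v - u) / 2 > 0" using prems(2) by simp
  have "eventually (\<lambda>n. R n < (v - u) / 2) sequentially"
    using order_tendstoD(2)[OF ss_tail_lim[OF p] hpos] unfolding R_def .
  then obtain M where M: "\<And>n. n \<ge> M \<Longrightarrow> R n < (v - u) / 2" unfolding eventually_sequentially by blast
  obtain n where n: "n \<ge> max M m" "y n < R (Suc n)" using inf[of "max M m"] unfolding R_def by blast
  have Rn: "R n < (v - u) / 2" using M n(1) by simp
  have nm: "m \<le> n" using n(1) by simp
  define c where "c = (u + v) / 2"
  have "sum y E \<le> c \<and> c \<le> sum y E + R m" using prems(3)[of c] prems(2) unfolding c_def R_def by auto
  then obtain C where C: "C \<subseteq> {m..}" "infsum y C = c - sum y E"
    using tailrep[OF p kak, of "c - sum y E" m] unfolding R_def by auto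
  define F where "F = C \<inter> {m..<n}"
  define C' where "C' = C \<inter> {n..}"
  have finF: "finite F" by (simp add: F_def)
  have CFC: "C = F \<union> C'" using C(1) by (auto simp: F_def C'_def)
  have "infsum y (F \<union> C') = sum y F + infsum y C'"
    by (rule ss_fin_Un[OF p finF]) (auto simp: F_def C'_def)
  hence "infsum y C = sum y F + infsum y C'" by (simp only: CFC[symmetric])
  moreover have "infsum y C' \<le> R n" unfolding R_def C'_def by (rule ss_mono[OF p]) auto
  moreover have "infsum y C' \<ge> 0" by (rule ss_nonneg[OF p])
  ultimately have base: "sum y E + sum y F \<le> c" "c - R n \<le> sum y E + sum y F" using C(2) by auto
  define b where "b = sum y E + sum y F"
  define E' where "E' = insert n (E \<union> F)"
  have E'sub: "E' \<subseteq> {..<Suc n}" using prems(1) nm by (auto simp: E'_def F_def)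
  have EF: "E \<inter> F = {}" using prems(1) by (auto simp: F_def)
  have sumEF: "sum y (E \<union> F) = b" unfolding b_def using sum.union_disjoint[OF finE finF EF] .
  have nEF: "n \<notin> E \<union> F" using prems(1) nm by (auto simp: F_def)
  have sumE': "sum y E' = b + y n" unfolding E'_def using sumEF nEF finE finF by simp
  have lt': "b + y n < b + R (Suc n)" using n(2) by simp
  have int': "sum y E' \<le> w \<and> w \<le> sum y E' + infsum y {Suc n..}"
    if "b + y n \<le> w" "w \<le> b + R (Suc n)" for w
    using that sumE' ypos[of n] unfolding R_def by auto
  obtain z Bs where z: "b + y n \<le> z" "z \<le> b + R (Suc n)"
    and Bs: "Suc k \<le> card Bs" "\<forall>B\<in>Bs. infsum y B = z \<and> B \<inter> {..<Suc n} = E'"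
    using Suc.IH[OF E'sub lt' int'] by blast
  have "0 \<le> z - b" "z - b \<le> infsum y {Suc n..}" using z ypos[of n] unfolding R_def by auto
  then obtain G where G: "G \<subseteq> {Suc n..}" "infsum y G = z - b"
    using tailrep[OF p kak] by metis
  define B0 where "B0 = (E \<union> F) \<union> G"
  have "E \<union> F \<subseteq> {..<n}" using prems(1) nm by (auto simp: F_def)
  hence disjG: "(E \<union> F) \<inter> G = {}" using G(1) by (rule disj_bounds) simp
  have sB0: "infsum y B0 = z" unfolding B0_def
    using ss_fin_Un[OF p _ disjG] finE finF sumEF G(2) by simp
  have rB0: "B0 \<inter> {..<m} = E" using prems(1) G(1) nm by (auto simp: B0_def F_def subset_iff)
  have nB0: "n \<notin> B0" using nEF G(1) by (auto simp: B0_def subset_iff)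
  have nBs: "n \<in> B" if "B \<in> Bs" for B
  proof -
    have "n \<in> E'" by (simp add: E'_def)
    thus ?thesis using Bs(2) that by blast
  qed
  have B0Bs: "B0 \<notin> Bs" using nB0 nBs by blast
  have finBs: "finite Bs" using Bs(1) card.infinite by fastforce
  have card': "Suc (Suc k) \<le> card (insert B0 Bs)" using Bs(1) finBs B0Bs by simp
  have rBs: "B \<inter> {..<m} = E" if "B \<in> Bs" for B
  proof -
    have "B \<inter> {..<m} = (B \<inter> {..<Suc n}) \<inter> {..<m}" using nm by auto
    also have "\<dots> = E' \<inter> {..<m}" using Bs(2) that by simp
    also have "\<dots> = E" using prems(1) nm by (auto simp: E'_def F_def)
    finally show ?thesis .
  qed
  have h1: "(u + v) / 2 - (v - u) / 2 = u" by (simp add: field_simps)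
  have h2: "(u + v) / 2 + (v - u) / 2 = v" by (simp add: field_simps)
  note half1 = h1 h2
  have cu: "c - (v - u) / 2 = u" using h1 by (simp add: c_def)
  have cv: "c + (v - u) / 2 = v" using h2 by (simp add: c_def)
  have bb1: "c - R n \<le> b" using base(2) by (simp add: b_def)
  have bb2: "b \<le> c" using base(1) by (simp add: b_def)
  have yn0: "0 < y n" by (rule ypos)
  have zu: "u \<le> z" using z(1) bb1 Rn yn0 cu by linarith
  have RSn: "R (Suc n) \<le> R n" using Rmono[of n "Suc n"] by simp
  have zv: "z \<le> v" using z(2) bb2 Rn RSn cv by linarith
  have "\<forall>B\<in>insert B0 Bs. infsum y B = z \<and> B \<inter> {..<m} = E"
    using sB0 rB0 Bs(2) rBs by blast
  thus ?case using card' zu zv by blast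
qed


definition bb :: "nat \<Rightarrow> real" where "bb k = (1/2) ^ Suc k"
definition H :: "real \<Rightarrow> nat set set" where "H t = {G. infsum bb G = t}"
definition dy :: "real \<Rightarrow> bool" where "dy t \<longleftrightarrow> (\<exists>j p::nat. t = real j / 2 ^ p)"

lemma bb_eq: "bb = (\<lambda>k. (1/2::real) * (1/2) ^ k)"
  by (rule ext) (simp add: bb_def)

lemma bb_summable: "summable bb"
  unfolding bb_eq by (intro summable_mult) simp

lemma bb_pss: "pss bb" using bb_summable by (simp add: pss_def bb_def)

lemma bb_suminf: "suminf bb = 1"
proof -
  have "suminf (\<lambda>k. (1/2::real) * (1/2) ^ k) = 1/2 * suminf (\<lambda>k. (1/2::real) ^ k)"
    by (rule suminf_mult) simp
  also have "suminf (\<lambda>k. (1/2::real) ^ k) = 2" using suminf_geometric[of "1/2::real"] by simp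
  finally show ?thesis unfolding bb_eq by simp
qed

lemma bb_partial: "sum bb {..<m} = 1 - (1/2) ^ m"
  by (induction m) (auto simp: bb_def)

lemma bb_tail: "infsum bb {m..} = (1/2) ^ m"
  using ss_tail[OF bb_pss, of m] bb_suminf bb_partial by simp

lemma bb_UNIV: "infsum bb UNIV = 1"
  using bb_tail[of 0] by (simp add: atLeast_0)

lemma bb_kak: "bb n = infsum bb {Suc n..}"
  by (simp add: bb_tail bb_def)

lemma H_range: "G \<in> H t \<Longrightarrow> 0 \<le> t \<and> t \<le> 1"
  unfolding H_def using ss_nonneg[OF bb_pss, of G] ss_mono[OF bb_pss, of G UNIV] bb_UNIV by auto

lemma H_empty: "\<not> (0 \<le> t \<and> t \<le> 1) \<Longrightarrow> H t = {}"
  using H_range by blast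

lemma H_nonempty: "0 \<le> t \<Longrightarrow> t \<le> 1 \<Longrightarrow> H t \<noteq> {}"
proof -
  assume "0 \<le> t" "t \<le> 1"
  moreover have "n \<ge> 0 \<Longrightarrow> bb n \<le> infsum bb {Suc n..}" for n using bb_kak by simp
  ultimately obtain B where "B \<subseteq> {0..}" "infsum bb B = t"
    using greedy[OF bb_pss, of 0 t] bb_tail[of 0] by auto
  thus ?thesis by (auto simp: H_def)
qed

lemma bin_pair_aux:
  assumes eq: "infsum bb G = infsum bb G'" and k: "k \<in> G" "k \<notin> G'"
    and below: "\<And>i. i < k \<Longrightarrow> i \<in> G \<longleftrightarrow> i \<in> G'"
  shows "finite G \<and> infinite G'"
proof -
  note p = bb_pss
  define L where "L = G \<inter> {..<k}"
  define Gr where "Gr = G \<inter> {Suc k..}"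
  define Gr' where "Gr' = G' \<inter> {Suc k..}"
  have L': "L = G' \<inter> {..<k}" using below by (auto simp: L_def)
  have finL: "finite L" by (simp add: L_def)
  have dG: "G = L \<union> ({k} \<union> Gr)" using k(1) by (auto simp: L_def Gr_def not_less_eq_eq)
  have dG': "G' = L \<union> Gr'" using k(2) L' by (auto simp: Gr'_def not_less_eq_eq)
  have s1: "infsum bb ({k} \<union> Gr) = bb k + infsum bb Gr"
    using ss_fin_Un[OF p, of "{k}" Gr] by (simp add: Gr_def)
  have s2: "infsum bb (L \<union> ({k} \<union> Gr)) = sum bb L + infsum bb ({k} \<union> Gr)"
    by (rule ss_fin_Un[OF p finL]) (auto simp: L_def Gr_def)
  have s3: "infsum bb (L \<union> Gr') = sum bb L + infsum bb Gr'"
    by (rule ss_fin_Un[OF p finL]) (auto simp: L_def Gr'_def)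
  have e: "bb k + infsum bb Gr = infsum bb Gr'"
    using eq s1 s2 s3 dG dG' by simp
  have le: "infsum bb Gr' \<le> infsum bb {Suc k..}" by (rule ss_mono[OF p]) (auto simp: Gr'_def)
  have kk: "bb k = infsum bb {Suc k..}" by (rule bb_kak)
  have g0: "infsum bb Gr \<ge> 0" by (rule ss_nonneg[OF p])
  have "infsum bb Gr = 0" using e le kk g0 by linarith
  hence Gr0: "Gr = {}" using ss_zero_iff[OF p] by blast
  have all: "{Suc k..} \<subseteq> G'"
  proof
    fix i assume i: "i \<in> {Suc k..}"
    show "i \<in> G'"
    proof (rule ccontr)
      assume "i \<notin> G'"
      hence "infsum bb Gr' < infsum bb {Suc k..}"
        using ss_strict[OF p, of Gr' "{Suc k..}" i] i by (auto simp: Gr'_def)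
      thus False using e kk g0 by linarith
    qed
  qed
  have "G \<subseteq> {..k}" using dG Gr0 by (auto simp: L_def)
  hence "finite G" using finite_subset by blast
  moreover have "infinite G'" using all infinite_Ici[of "Suc k"] finite_subset by blast
  ultimately show ?thesis by blast
qed

lemma bin_pair:
  assumes eq: "infsum bb G = infsum bb G'" and ne: "G \<noteq> G'"
  shows "(finite G \<and> infinite G') \<or> (infinite G \<and> finite G')"
proof -
  have "\<exists>k. (k \<in> G) \<noteq> (k \<in> G')" using ne by blast
  define k where "k = (LEAST k. (k \<in> G) \<noteq> (k \<in> G'))"
  have kd: "(k \<in> G) \<noteq> (k \<in> G')" unfolding k_def by (rule LeastI_ex) fact
  have below: "i < k \<Longrightarrow> i \<in> G \<longleftrightarrow> i \<in> G'" for i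
    using not_less_Least[of i "\<lambda>k. (k \<in> G) \<noteq> (k \<in> G')"] unfolding k_def by blast
  show ?thesis
  proof (cases "k \<in> G")
    case True
    hence "k \<notin> G'" using kd by blast
    thus ?thesis using bin_pair_aux[OF eq True _ below] by blast
  next
    case False
    hence "k \<in> G'" using kd by blast
    thus ?thesis using bin_pair_aux[OF eq[symmetric] \<open>k \<in> G'\<close> False] below by blast
  qed
qed

lemma subsing_card:
  assumes "\<And>a b. a \<in> S \<Longrightarrow> b \<in> S \<Longrightarrow> a = b"
  shows "finite S \<and> card S \<le> 1"
proof (cases "S = {}")
  case False
  then obtain a where "a \<in> S" by blast
  hence "S = {a}" using assms by blast
  thus ?thesis by simp
qed simp

lemma H_card: "finite (H t) \<and> card (H t) \<le> 2"
proof -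
  define Fi where "Fi = {G \<in> H t. finite G}"
  define In where "In = {G \<in> H t. infinite G}"
  have "finite Fi \<and> card Fi \<le> 1"
  proof (rule subsing_card)
    fix a b assume ab: "a \<in> Fi" "b \<in> Fi"
    show "a = b"
    proof (rule ccontr)
      assume ne: "a \<noteq> b"
      have "infsum bb a = infsum bb b" using ab by (simp add: Fi_def H_def)
      from bin_pair[OF this ne] ab show False by (simp add: Fi_def)
    qed
  qed
  moreover have "finite In \<and> card In \<le> 1"
  proof (rule subsing_card)
    fix a b assume ab: "a \<in> In" "b \<in> In"
    show "a = b"
    proof (rule ccontr)
      assume ne: "a \<noteq> b"
      have "infsum bb a = infsum bb b" using ab by (simp add: In_def H_def)
      from bin_pair[OF this ne] ab show False by (simp add: In_def)
    qed
  qed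
  moreover have "H t = Fi \<union> In" by (auto simp: Fi_def In_def)
  ultimately show ?thesis using card_Un_le[of Fi In] by auto
qed

lemma H_finite: "finite (H t)" using H_card by blast

lemma dy_sum: "finite F \<Longrightarrow> dy (sum bb F)"
proof -
  assume fin: "finite F"
  then obtain K where K: "F \<subseteq> {..<K}" using finite_nat_bounded by blast
  have e: "bb i = real (2 ^ (K - Suc i)) / 2 ^ K" if "i \<in> F" for i
  proof -
    have iK: "Suc i \<le> K" using K that by auto
    have "(2::real) ^ K = 2 ^ ((K - Suc i) + Suc i)" using iK by simp
    hence "(2::real) ^ K = 2 ^ (K - Suc i) * 2 ^ Suc i" by (simp only: power_add)
    thus ?thesis by (simp add: bb_def power_divide)
  qed
  have "sum bb F = (\<Sum>i\<in>F. real (2 ^ (K - Suc i)) / 2 ^ K)" using e by (rule sum.cong[OF refl])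
  also have "\<dots> = real (\<Sum>i\<in>F. 2 ^ (K - Suc i)) / 2 ^ K"
    by (simp add: sum_divide_distrib)
  finally show ?thesis unfolding dy_def by blast
qed

lemma dy_rep: "j < 2 ^ p \<Longrightarrow> \<exists>F. F \<subseteq> {..<p} \<and> sum bb F = real j / 2 ^ p"
proof (induction p arbitrary: j)
  case 0 thus ?case by (intro exI[of _ "{}"]) simp
next
  case (Suc p)
  define q where "q = j div 2"
  define r where "r = j mod 2"
  have jq: "j = 2 * q + r" by (simp add: q_def r_def)
  have qlt: "q < 2 ^ p" using Suc.prems by (simp add: q_def)
  obtain F where F: "F \<subseteq> {..<p}" "sum bb F = real q / 2 ^ p" using Suc.IH[OF qlt] by blast
  have r01: "r = 0 \<or> r = 1" by (auto simp: r_def)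
  show ?case
  proof (cases "r = 0")
    case True
    have "real j / 2 ^ Suc p = real q / 2 ^ p" using jq True by simp
    thus ?thesis using F by (intro exI[of _ F]) auto
  next
    case False
    hence r1: "r = 1" using r01 by simp
    have pF: "p \<notin> F" using F(1) by auto
    have "sum bb (insert p F) = bb p + real q / 2 ^ p" using pF F by (simp add: finite_subset[OF F(1)])
    also have "\<dots> = real j / 2 ^ Suc p" using jq r1 by (simp add: bb_def field_simps)
    finally show ?thesis using F(1) by (intro exI[of _ "insert p F"]) auto
  qed
qed

lemma H_two:
  assumes "dy t" "0 < t" "t < 1" shows "card (H t) = 2"
proof -
  obtain j p where jp: "t = real j / 2 ^ p" using assms(1) unfolding dy_def by blast
  have "real j < 2 ^ p" using assms(3) jp by (simp add: divide_less_eq)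
  hence "j < 2 ^ p" by (metis of_nat_less_iff of_nat_numeral of_nat_power)
  then obtain F where F: "F \<subseteq> {..<p}" "sum bb F = t" using dy_rep jp by blast
  have finF: "finite F" using F(1) finite_subset by blast
  have Fne: "F \<noteq> {}" using F(2) assms(2) by auto
  define k where "k = Max F"
  have kF: "k \<in> F" using finF Fne by (simp add: k_def)
  have kmax: "i \<in> F \<Longrightarrow> i \<le> k" for i using finF by (simp add: k_def)
  define G where "G = (F - {k}) \<union> {Suc k..}"
  have d: "(F - {k}) \<inter> {Suc k..} = {}" using kmax by fastforce
  have "infsum bb G = sum bb (F - {k}) + infsum bb {Suc k..}"
    unfolding G_def by (rule ss_fin_Un[OF bb_pss _ d]) (simp add: finF)
  also have "\<dots> = sum bb (F - {k}) + bb k" using bb_kak by simp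
  also have "\<dots> = sum bb F" using sum.remove[OF finF kF, of bb] by simp
  finally have G: "infsum bb G = t" using F(2) by simp
  have "infinite G" unfolding G_def using infinite_Ici[of "Suc k"] by (meson finite_Un)
  hence GF: "G \<noteq> F" using finF by blast
  have "F \<in> H t" "G \<in> H t" using G F(2) finF by (auto simp: H_def)
  hence "{F, G} \<subseteq> H t" by blast
  hence "card {F, G} \<le> card (H t)" using H_finite card_mono by blast
  hence "2 \<le> card (H t)" using GF by simp
  thus ?thesis using H_card[of t] by simp
qed

lemma H_one:
  assumes "0 \<le> t" "t \<le> 1" "\<not> (dy t \<and> 0 < t \<and> t < 1)" shows "card (H t) = 1"
proof -
  have ne: "H t \<noteq> {}" using H_nonempty assms by blast
  have "\<forall>a\<in>H t. \<forall>b\<in>H t. a = b"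
  proof (intro ballI, rule ccontr)
    fix a b assume ab: "a \<in> H t" "b \<in> H t" "a \<noteq> b"
    have eq: "infsum bb a = infsum bb b" using ab by (simp add: H_def)
    have "\<exists>F. F \<in> H t \<and> finite F \<and> (\<exists>G. G \<in> H t \<and> F \<noteq> G)"
      using bin_pair[OF eq ab(3)] ab by blast
    then obtain F G where FG: "F \<in> H t" "finite F" "G \<in> H t" "F \<noteq> G" by blast
    have tF: "t = sum bb F" using FG by (simp add: H_def)
    hence "dy t" using dy_sum FG(2) by simp
    moreover have "0 < t"
    proof -
      have tF': "t = infsum bb F" "t = infsum bb G" using FG by (auto simp: H_def)
      have "F \<noteq> {} \<or> G \<noteq> {}" using FG(4) by blast
      thus ?thesis
      proof
        assume "F \<noteq> {}" thus ?thesis using tF'(1) ss_pos[OF bb_pss] by simp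
      next
        assume "G \<noteq> {}" thus ?thesis using tF'(2) ss_pos[OF bb_pss] by simp
      qed
    qed
    moreover have "t < 1"
    proof -
      obtain i where "i \<notin> F" using FG(2) infinite_UNIV_nat by (metis UNIV_I finite_subset subsetI)
      hence "infsum bb F < infsum bb UNIV" using ss_strict[OF bb_pss, of F UNIV i] by simp
      thus ?thesis using FG(1) bb_UNIV by (simp add: H_def)
    qed
    ultimately show False using assms(3) by blast
  qed
  hence "card (H t) \<le> 1" using H_finite card_le_Suc0_iff_eq by auto
  moreover have "card (H t) \<ge> 1" using ne H_finite by (simp add: Suc_leI card_gt_0_iff)
  ultimately show ?thesis by simp
qed

lemma dy_add: "dy a \<Longrightarrow> dy b \<Longrightarrow> dy (a + b)"
proof -
  assume "dy a" "dy b"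
  then obtain j p j' q where a: "a = real j / 2 ^ p" and b: "b = real j' / 2 ^ q" unfolding dy_def by blast
  have "real j / 2 ^ p + real j' / 2 ^ q = (real j * 2 ^ q + real j' * 2 ^ p) / (2 ^ p * 2 ^ q)"
    by (rule add_frac_eq) simp_all
  also have "\<dots> = real (j * 2 ^ q + j' * 2 ^ p) / 2 ^ (p + q)" by (simp add: power_add)
  finally show ?thesis unfolding dy_def a b by blast
qed

lemma dy_sub: "dy a \<Longrightarrow> dy b \<Longrightarrow> a \<le> b \<Longrightarrow> dy (b - a)"
proof -
  assume "dy a" "dy b" "a \<le> b"
  then obtain j p j' q where a: "a = real j / 2 ^ p" and b: "b = real j' / 2 ^ q" unfolding dy_def by blast
  have e: "real j' / 2 ^ q - real j / 2 ^ p = (real j' * 2 ^ p - real j * 2 ^ q) / (2 ^ q * 2 ^ p)"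
    by (rule diff_frac_eq) simp_all
  have "0 \<le> real j' / 2 ^ q - real j / 2 ^ p" using \<open>a \<le> b\<close> a b by simp
  hence "0 \<le> (real j' * 2 ^ p - real j * 2 ^ q) / (2 ^ q * 2 ^ p)" using e by simp
  moreover have pos: "(2::real) ^ q * 2 ^ p > 0" by simp
  ultimately have "0 \<le> real j' * 2 ^ p - real j * 2 ^ q" by (simp add: zero_le_divide_iff)
  hence "real (j * 2 ^ q) \<le> real (j' * 2 ^ p)" by simp
  hence le: "j * 2 ^ q \<le> j' * 2 ^ p" by (simp only: of_nat_le_iff)
  have "b - a = real (j' * 2 ^ p - j * 2 ^ q) / 2 ^ (q + p)"
    using e le unfolding a b by (simp add: of_nat_diff power_add)
  thus ?thesis unfolding dy_def by blast
qed

lemma dy_countable: "countable {t. dy t}"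
proof -
  have "{t. dy t} = (\<lambda>(j, p). real j / 2 ^ p) ` (UNIV :: (nat \<times> nat) set)"
    by (auto simp: dy_def)
  thus ?thesis by simp
qed

lemma nondy_exists: "a < b \<Longrightarrow> \<exists>s. a < s \<and> s < b \<and> \<not> dy s"
proof (rule ccontr)
  assume ab: "a < b" and "\<not> (\<exists>s. a < s \<and> s < b \<and> \<not> dy s)"
  hence "{a<..<b} \<subseteq> {t. dy t}" by auto
  hence "countable {a<..<b}" using dy_countable countable_subset by blast
  thus False using uncountable_open_interval ab by blast
qed

lemma dy_small: "\<delta> > 0 \<Longrightarrow> \<exists>s. 0 < s \<and> s < \<delta> \<and> s < 1 \<and> dy s"
proof -
  assume d: "\<delta> > 0"
  obtain n where n: "(1/2::real) ^ n < min \<delta> 1" using real_arch_pow_inv[of "min \<delta> 1" "1/2"] d by auto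
  have "dy ((1/2) ^ n)" unfolding dy_def by (rule exI[of _ 1], rule exI[of _ n]) (simp add: power_divide)
  thus ?thesis using n by (intro exI[of _ "(1/2) ^ n"]) auto
qed


lemma shift_img: "B \<inter> {Suc N..} = (\<lambda>k. Suc N + k) ` {k. Suc N + k \<in> B}"
proof
  show "B \<inter> {Suc N..} \<subseteq> (\<lambda>k. Suc N + k) ` {k. Suc N + k \<in> B}"
  proof
    fix x assume x: "x \<in> B \<inter> {Suc N..}"
    hence "x = Suc N + (x - Suc N)" by auto
    moreover have "Suc N + (x - Suc N) \<in> B" using x by auto
    ultimately show "x \<in> (\<lambda>k. Suc N + k) ` {k. Suc N + k \<in> B}" by blast
  qed
qed auto

lemma decomp:
  assumes p: "pss y" and tail: "\<And>k. y (Suc N + k) = c * bb k"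
  shows "infsum y B = sum y (B \<inter> {..N}) + c * infsum bb {k. Suc N + k \<in> B}"
proof -
  have "B = (B \<inter> {..N}) \<union> (B \<inter> {Suc N..})" by auto
  hence "infsum y B = infsum y ((B \<inter> {..N}) \<union> (B \<inter> {Suc N..}))" by simp
  also have "\<dots> = sum y (B \<inter> {..N}) + infsum y (B \<inter> {Suc N..})"
    by (rule ss_fin_Un[OF p]) auto
  also have "infsum y (B \<inter> {Suc N..}) = infsum (y \<circ> (\<lambda>k. Suc N + k)) {k. Suc N + k \<in> B}"
    unfolding shift_img by (rule infsum_reindex) (simp add: inj_on_def)
  also have "\<dots> = infsum (\<lambda>k. c * bb k) {k. Suc N + k \<in> B}"
    using tail by (simp add: o_def)
  also have "\<dots> = c * infsum bb {k. Suc N + k \<in> B}" by (rule infsum_cmult_right')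
  finally show ?thesis .
qed

definition splitB :: "nat \<Rightarrow> nat set \<Rightarrow> nat set \<times> nat set" where
  "splitB N B = (B \<inter> {..N}, {k. Suc N + k \<in> B})"
definition joinB :: "nat \<Rightarrow> nat set \<times> nat set \<Rightarrow> nat set" where
  "joinB N EG = fst EG \<union> (\<lambda>k. Suc N + k) ` snd EG"

lemma join_split: "joinB N (splitB N B) = B"
proof -
  have "B = (B \<inter> {..N}) \<union> (B \<inter> {Suc N..})" by auto
  thus ?thesis unfolding joinB_def splitB_def using shift_img[of B N] by simp
qed

lemma split_join:
  assumes "fst EG \<subseteq> {..N}" shows "splitB N (joinB N EG) = EG"
proof -
  obtain E G where EG: "EG = (E, G)" by fastforce
  have E: "E \<subseteq> {..N}" using assms EG by simp
  have 1: "(E \<union> (\<lambda>k. Suc N + k) ` G) \<inter> {..N} = E" using E by auto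
  have 2: "{k. Suc N + k \<in> E \<union> (\<lambda>k. Suc N + k) ` G} = G"
  proof
    show "{k. Suc N + k \<in> E \<union> (\<lambda>k. Suc N + k) ` G} \<subseteq> G"
    proof
      fix k assume "k \<in> {k. Suc N + k \<in> E \<union> (\<lambda>k. Suc N + k) ` G}"
      hence "Suc N + k \<in> E \<or> Suc N + k \<in> (\<lambda>k. Suc N + k) ` G" by simp
      thus "k \<in> G"
      proof
        assume "Suc N + k \<in> E" thus ?thesis using E by auto
      next
        assume "Suc N + k \<in> (\<lambda>k. Suc N + k) ` G" thus ?thesis by auto
      qed
    qed
  qed auto
  show ?thesis unfolding EG splitB_def joinB_def using 1 2 by simp
qed

lemma count_bij:
  assumes p: "pss y" and tail: "\<And>k. y (Suc N + k) = c * bb k" and c: "c > 0"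
  shows "bij_betw (splitB N) {B. infsum y B = z} (SIGMA E:Pow {..N}. H ((z - sum y E) / c))"
proof (rule bij_betw_byWitness[where f' = "joinB N"])
  show "\<forall>a\<in>{B. infsum y B = z}. joinB N (splitB N a) = a" by (simp add: join_split)
  show "\<forall>a'\<in>(SIGMA E:Pow {..N}. H ((z - sum y E) / c)). splitB N (joinB N a') = a'"
    by (auto intro!: split_join)
  show "splitB N ` {B. infsum y B = z} \<subseteq> (SIGMA E:Pow {..N}. H ((z - sum y E) / c))"
  proof
    fix EG assume "EG \<in> splitB N ` {B. infsum y B = z}"
    then obtain B where B: "infsum y B = z" "EG = splitB N B" by blast
    have "z = sum y (B \<inter> {..N}) + c * infsum bb {k. Suc N + k \<in> B}"
      using decomp[OF p tail, of B] B(1) by simp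
    hence "infsum bb {k. Suc N + k \<in> B} = (z - sum y (B \<inter> {..N})) / c" using c by (simp add: field_simps)
    thus "EG \<in> (SIGMA E:Pow {..N}. H ((z - sum y E) / c))" using B(2) by (simp add: splitB_def H_def)
  qed
  show "joinB N ` (SIGMA E:Pow {..N}. H ((z - sum y E) / c)) \<subseteq> {B. infsum y B = z}"
  proof
    fix B assume "B \<in> joinB N ` (SIGMA E:Pow {..N}. H ((z - sum y E) / c))"
    then obtain E G where EG: "E \<subseteq> {..N}" "G \<in> H ((z - sum y E) / c)" "B = joinB N (E, G)" by blast
    have sp: "splitB N B = (E, G)" using split_join[of "(E, G)" N] EG by simp
    hence "B \<inter> {..N} = E" "{k. Suc N + k \<in> B} = G" by (simp_all add: splitB_def)
    hence "infsum y B = sum y E + c * infsum bb G" using decomp[OF p tail, of B] by simp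
    also have "infsum bb G = (z - sum y E) / c" using EG(2) by (simp add: H_def)
    finally show "B \<in> {B. infsum y B = z}" using c by simp
  qed
qed

lemma count_card:
  assumes p: "pss y" and tail: "\<And>k. y (Suc N + k) = c * bb k" and c: "c > 0"
  shows "finite {B. infsum y B = z} \<and>
         card {B. infsum y B = z} = (\<Sum>E\<in>Pow {..N}. card (H ((z - sum y E) / c)))"
proof -
  have b: "bij_betw (splitB N) {B. infsum y B = z} (SIGMA E:Pow {..N}. H ((z - sum y E) / c))"
    by (rule count_bij[OF p tail c])
  have fin: "finite (SIGMA E:Pow {..N}. H ((z - sum y E) / c))"
    by (intro finite_SigmaI) (simp_all add: H_finite)
  have "finite {B. infsum y B = z}" using bij_betw_finite[OF b] fin by simp
  moreover have "card {B. infsum y B = z} = card (SIGMA E:Pow {..N}. H ((z - sum y E) / c))"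
    by (rule bij_betw_same_card[OF b])
  moreover have "\<dots> = (\<Sum>E\<in>Pow {..N}. card (H ((z - sum y E) / c)))"
    by (rule card_SigmaI) (simp_all add: H_finite)
  ultimately show ?thesis by simp
qed


definition xa :: "nat \<Rightarrow> real" where "xa n = (if n < 2 then 2 else bb (n - 2))"

lemma xa_tail: "xa (Suc 1 + k) = 1 * bb k" by (simp add: xa_def)

lemma xa_pss: "pss xa"
proof -
  have "(\<lambda>n. xa (n + 2)) = bb" by (rule ext) (simp add: xa_def)
  hence "summable (\<lambda>n. xa (n + 2))" using bb_summable by simp
  hence "summable xa" using summable_iff_shift[of xa 2] by blast
  moreover have "xa n > 0" for n by (simp add: xa_def bb_def)
  ultimately show ?thesis by (simp add: pss_def)
qed

definition uu :: "real \<Rightarrow> nat" where "uu t = card (H t)"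

lemma uu_range: "0 \<le> t \<Longrightarrow> t \<le> 1 \<Longrightarrow> uu t = 1 \<or> uu t = 2"
proof -
  assume "0 \<le> t" "t \<le> 1"
  hence "H t \<noteq> {}" by (rule H_nonempty)
  hence "uu t \<ge> 1" using H_finite by (simp add: uu_def Suc_leI card_gt_0_iff)
  moreover have "uu t \<le> 2" using H_card by (simp add: uu_def)
  ultimately show ?thesis by linarith
qed

lemma uu_out: "\<not> (0 \<le> t \<and> t \<le> 1) \<Longrightarrow> uu t = 0"
  using H_empty by (simp add: uu_def)

lemma uu_0: "uu 0 = 1" unfolding uu_def by (rule H_one) auto

lemma uu_half: "uu (1/2) = 2"
proof -
  have "dy (1/2)" unfolding dy_def by (rule exI[of _ 1], rule exI[of _ 1]) simp
  thus ?thesis unfolding uu_def by (intro H_two) auto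
qed

lemma pow1: "Pow {..1::nat} = {{}, {0}, {1}, {0, 1}}"
proof -
  have "{..1::nat} = {0, 1}" by auto
  thus ?thesis by (auto simp: Pow_insert)
qed

lemma xa_count:
  "finite {B. infsum xa B = z} \<and> card {B. infsum xa B = z} = uu z + 2 * uu (z - 2) + uu (z - 4)"
proof -
  have c: "finite {B. infsum xa B = z} \<and>
         card {B. infsum xa B = z} = (\<Sum>E\<in>Pow {..1}. card (H ((z - sum xa E) / 1)))"
    by (rule count_card[OF xa_pss xa_tail]) simp
  have "(\<Sum>E\<in>Pow {..1::nat}. card (H ((z - sum xa E) / 1))) = uu z + 2 * uu (z - 2) + uu (z - 4)"
    unfolding pow1 by (simp add: uu_def xa_def)
  thus ?thesis using c by simp
qed

lemma uu_pos: "uu t > 0 \<longleftrightarrow> 0 \<le> t \<and> t \<le> 1"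
proof (cases "0 \<le> t \<and> t \<le> 1")
  case True
  hence "uu t = 1 \<or> uu t = 2" using uu_range by blast
  hence "uu t > 0" by linarith
  thus ?thesis using True by simp
next
  case False
  hence "uu t = 0" by (rule uu_out)
  thus ?thesis using False by simp
qed

lemma xa_ach: "(\<exists>B. infsum xa B = z) \<longleftrightarrow> z \<in> {0..1} \<union> {2..3} \<union> {4..5}"
proof -
  have fin: "finite {B. infsum xa B = z}" using xa_count by blast
  have cnt: "card {B. infsum xa B = z} = uu z + 2 * uu (z - 2) + uu (z - 4)" using xa_count by blast
  have e1: "(\<exists>B. infsum xa B = z) \<longleftrightarrow> {B. infsum xa B = z} \<noteq> {}" by blast
  have "(\<exists>B. infsum xa B = z) \<longleftrightarrow> card {B. infsum xa B = z} > 0"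
    unfolding e1 card_gt_0_iff using fin by simp
  also have "\<dots> \<longleftrightarrow> uu z > 0 \<or> uu (z - 2) > 0 \<or> uu (z - 4) > 0"
    unfolding cnt by simp
  also have "\<dots> \<longleftrightarrow> (0 \<le> z \<and> z \<le> 1) \<or> (0 \<le> z - 2 \<and> z - 2 \<le> 1) \<or> (0 \<le> z - 4 \<and> z - 4 \<le> 1)"
    unfolding uu_pos by (rule refl)
  also have "\<dots> \<longleftrightarrow> (0 \<le> z \<and> z \<le> 1) \<or> (2 \<le> z \<and> z \<le> 3) \<or> (4 \<le> z \<and> z \<le> 5)"
    by (simp only: diff_ge_0_iff_ge le_diff_eq) simp
  also have "\<dots> \<longleftrightarrow> z \<in> {0..1} \<union> {2..3} \<union> {4..5}" by simp
  finally show ?thesis .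
qed

lemma xa_vals:
  assumes "z \<in> {0..1} \<union> {2..3} \<union> {4..5}"
  shows "card {B. infsum xa B = z} \<in> {1, 2, 4}"
proof -
  have cnt: "card {B. infsum xa B = z} = uu z + 2 * uu (z - 2) + uu (z - 4)" using xa_count by blast
  consider "z \<in> {0..1}" | "z \<in> {2..3}" | "z \<in> {4..5}" using assms by blast
  thus ?thesis
  proof cases
    case 1
    hence "uu (z - 2) = 0" "uu (z - 4) = 0" by (auto intro!: uu_out)
    thus ?thesis using cnt uu_range[of z] 1 by auto
  next
    case 2
    hence "uu z = 0" "uu (z - 4) = 0" by (auto intro!: uu_out)
    thus ?thesis using cnt uu_range[of "z - 2"] 2 by auto
  next
    case 3
    hence "uu z = 0" "uu (z - 2) = 0" by (auto intro!: uu_out)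
    thus ?thesis using cnt uu_range[of "z - 4"] 3 by auto
  qed
qed

lemma cf_xa: "cardinal_function xa z = CFin (card {B. infsum xa B = z})"
proof -
  have "{A. subsum xa A = z} = {B. infsum xa B = z}" using subsum_infsum[OF xa_pss] by simp
  thus ?thesis using xa_count[of z] by (simp add: cardinal_function_def cardval_def)
qed

lemma ach_xa: "achievement_set xa = {0..1} \<union> {2..3} \<union> {4..5}"
proof -
  have "achievement_set xa = {z. \<exists>B. infsum xa B = z}"
    unfolding achievement_set_def subsum_infsum[OF xa_pss] by blast
  also have "\<dots> = {0..1} \<union> {2..3} \<union> {4..5}"
    by (rule set_eqI) (simp only: mem_Collect_eq xa_ach)
  finally show ?thesis .
qed

lemma partA: "{CFin 1, CFin 2, CFin 4} \<in> family_I"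
proof -
  have r: "cf_range xa = {CFin 1, CFin 2, CFin 4}"
  proof
    show "cf_range xa \<subseteq> {CFin 1, CFin 2, CFin 4}"
      unfolding cf_range_def ach_xa using xa_vals cf_xa by fastforce
    have "card {B. infsum xa B = 0} = 1" using xa_count[of 0] uu_0 uu_out[of "0 - 2"] uu_out[of "0 - 4"] by simp
    moreover have "card {B. infsum xa B = 2} = 2" using xa_count[of 2] uu_0 uu_out[of "2::real"] uu_out[of "2 - 4"] by simp
    moreover have "card {B. infsum xa B = 5/2} = 4"
      using xa_count[of "5/2"] uu_half uu_out[of "5/2::real"] uu_out[of "5/2 - 4"] by simp
    ultimately have "CFin 1 = cardinal_function xa 0" "CFin 2 = cardinal_function xa 2"
       "CFin 4 = cardinal_function xa (5/2)" using cf_xa by simp_all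
    moreover have "(0::real) \<in> achievement_set xa" "(2::real) \<in> achievement_set xa"
       "(5/2::real) \<in> achievement_set xa" unfolding ach_xa by auto
    ultimately show "{CFin 1, CFin 2, CFin 4} \<subseteq> cf_range xa" unfolding cf_range_def by blast
  qed
  have adm: "admissible_seq xa" using xa_pss by (simp add: admissible_seq_def pss_def)
  have fu: "finite_union_intervals (achievement_set xa)"
    unfolding finite_union_intervals_def ach_xa
    by (rule exI[of _ "{(0, 1), (2, 3), (4, 5)}"]) auto
  show ?thesis unfolding family_I_def using r adm fu by blast
qed


lemma geom_tail:
  assumes p: "pss y" and eq: "\<And>n. n \<ge> Mst \<Longrightarrow> y n = infsum y {Suc n..}"
  shows "y (Mst + k) = infsum y {Mst..} * bb k"
proof -
  define R where "R n = infsum y {n..}" for n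
  have Rstep: "R n = y n + R (Suc n)" for n unfolding R_def by (rule ss_tail_step[OF p])
  have Rk: "R (Mst + k) = R Mst / 2 ^ k" for k
  proof (induction k)
    case 0 show ?case by simp
  next
    case (Suc k)
    have "R (Mst + k) = 2 * R (Suc (Mst + k))" using Rstep[of "Mst + k"] eq[of "Mst + k"] by (simp add: R_def)
    thus ?case using Suc.IH by simp
  qed
  have "y (Mst + k) = R (Suc (Mst + k))" using eq[of "Mst + k"] by (simp add: R_def)
  also have "\<dots> = R Mst / 2 ^ Suc k" using Rk[of "Suc k"] by simp
  also have "\<dots> = R Mst * bb k" by (simp add: bb_def power_divide)
  finally show ?thesis by (simp add: R_def)
qed

lemma window_sum:
  assumes p: "pss y" and anti: "\<And>a b. a \<le> b \<Longrightarrow> y b \<le> y a" and c: "c > 0"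
    and d0: "0 < d" "d \<le> y N" and dgap: "\<And>i. i \<le> N \<Longrightarrow> y i > y N \<Longrightarrow> y i - y N \<ge> d"
    and z: "y N \<le> z" "z < y N + d"
  shows "(\<Sum>E\<in>Pow {..N}. uu ((z - sum y E) / c))
         = uu (z / c) + card {i. i \<le> N \<and> y i = y N} * uu ((z - y N) / c)"
proof -
  define I where "I = {i. i \<le> N \<and> y i = y N}"
  define T where "T = insert {} ((\<lambda>i. {i}) ` I)"
  have finI: "finite I" by (simp add: I_def)
  have ypos: "y i > 0" for i using pss_pos[OF p] .
  have TP: "T \<subseteq> Pow {..N}" by (auto simp: T_def I_def)
  have fP: "finite (Pow {..N})" by simp
  have zero: "uu ((z - sum y E) / c) = 0" if E: "E \<in> Pow {..N} - T" for E
  proof -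
    have EN: "E \<subseteq> {..N}" and ET: "E \<notin> T" using E by auto
    have finE: "finite E" using EN finite_subset by blast
    have Ene: "E \<noteq> {}" using ET by (auto simp: T_def)
    then obtain i where iE: "i \<in> E" by blast
    have gt: "sum y E > z"
    proof (cases "E = {i}")
      case True
      hence "i \<notin> I" using ET by (auto simp: T_def)
      moreover have iN: "i \<le> N" using iE EN by auto
      ultimately have "y i \<noteq> y N" by (simp add: I_def)
      moreover have "y N \<le> y i" using anti iN by blast
      ultimately have "y i > y N" by simp
      hence "y i \<ge> y N + d" using dgap[OF iN] by simp
      thus ?thesis using True z by simp
    next
      case False
      then obtain j where jE: "j \<in> E" "j \<noteq> i" using iE by blast
      have sub: "{i, j} \<subseteq> E" using iE jE by auto
      have "sum y {i, j} \<le> sum y E"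
        by (rule sum_mono2[OF finE sub]) (simp add: less_imp_le ypos)
      moreover have "sum y {i, j} = y i + y j" using jE by simp
      moreover have "y N \<le> y i" "y N \<le> y j" using anti iE jE EN by auto
      ultimately show ?thesis using z d0 by linarith
    qed
    have "(z - sum y E) / c < 0" using gt c by (simp add: divide_neg_pos)
    thus ?thesis by (intro uu_out) simp
  qed
  have "(\<Sum>E\<in>Pow {..N}. uu ((z - sum y E) / c)) = (\<Sum>E\<in>T. uu ((z - sum y E) / c))"
    by (rule sum.mono_neutral_right[OF fP TP]) (use zero in blast)
  also have "\<dots> = uu (z / c) + (\<Sum>E\<in>(\<lambda>i. {i}) ` I. uu ((z - sum y E) / c))"
    unfolding T_def by (subst sum.insert) (auto simp: finI)
  also have "(\<Sum>E\<in>(\<lambda>i. {i}) ` I. uu ((z - sum y E) / c)) = (\<Sum>i\<in>I. uu ((z - sum y {i}) / c))"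
    by (subst sum.reindex) (auto simp: inj_on_def)
  also have "\<dots> = (\<Sum>i\<in>I. uu ((z - y N) / c))"
    by (rule sum.cong) (auto simp: I_def)
  also have "\<dots> = card I * uu ((z - y N) / c)" by simp
  finally show ?thesis by (simp add: I_def)
qed

lemma ne124: "(a::nat) \<in> {1, 2, 4} \<Longrightarrow> a \<noteq> 3 \<and> a \<noteq> 5 \<and> a \<noteq> 0" by auto

lemma core:
  assumes p: "pss y" and anti: "\<And>a b. a \<le> b \<Longrightarrow> y b \<le> y a"
    and ach: "\<And>z. (\<exists>C. infsum y C = z) \<longleftrightarrow> a \<le> z \<and> z \<le> b"
    and vals: "\<And>z. a \<le> z \<Longrightarrow> z \<le> b \<Longrightarrow> finite {C. infsum y C = z} \<and> card {C. infsum y C = z} \<in> {1, 2, 4}"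
    and four: "a \<le> z4" "z4 \<le> b" "card {C. infsum y C = z4} = 4"
  shows False
proof -
  define S where "S = infsum y UNIV"
  define R where "R n = infsum y {n..}" for n
  have ypos: "y n > 0" for n using pss_pos[OF p] .
  have R0: "R 0 = S" by (simp add: R_def S_def atLeast_0)
  have Rstep: "R n = y n + R (Suc n)" for n unfolding R_def by (rule ss_tail_step[OF p])
  have Rmono: "i \<le> j \<Longrightarrow> R j \<le> R i" for i j unfolding R_def by (rule ss_mono[OF p]) auto
  have a0: "a = 0"
  proof -
    obtain C where "infsum y C = a" using ach[of a] four by auto
    hence "a \<ge> 0" using ss_nonneg[OF p] by metis
    moreover have "\<exists>C. infsum y C = 0" by (rule exI[of _ "{}"]) simp
    hence "a \<le> 0" using ach[of 0] by blast
    ultimately show ?thesis by simp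
  qed
  have bS: "b = S"
  proof -
    obtain C where "infsum y C = b" using ach[of b] four by auto
    hence "b \<le> S" using ss_mono[OF p, of C UNIV] by (simp add: S_def)
    moreover have "S \<le> b" using ach[of S] by (auto simp: S_def)
    ultimately show ?thesis by simp
  qed
  have achS: "\<exists>C. infsum y C = z" if "0 \<le> z" "z \<le> S" for z using ach[of z] that a0 bS by simp
  have valS: "finite {C. infsum y C = z} \<and> card {C. infsum y C = z} \<in> {1, 2, 4}"
    if "0 \<le> z" "z \<le> S" for z using vals[of z] that a0 bS by simp
  have kak: "y n \<le> R (Suc n)" for n
    unfolding R_def by (rule kakeya[OF p anti]) (use achS in \<open>auto simp: S_def\<close>)
  have Spos: "S > 0" using ss_pos[OF p, of UNIV] by (simp add: S_def)
  show False
  proof (cases "\<forall>M. \<exists>n\<ge>M. y n < R (Suc n)")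
    case True
    have kak': "\<And>n. y n \<le> infsum y {Suc n..}" using kak by (simp add: R_def)
    have inf': "\<And>M. \<exists>n\<ge>M. y n < infsum y {Suc n..}" using True by (simp add: R_def)
    have "\<exists>z. 0 \<le> z \<and> z \<le> S \<and> (\<exists>Bs. Suc 4 \<le> card Bs \<and> (\<forall>B\<in>Bs. infsum y B = z \<and> B \<inter> {..<0} = {}))"
    proof (rule nested[OF p kak' inf'])
      show "{} \<subseteq> {..<0::nat}" by simp
      show "0 < S" by (rule Spos)
      show "sum y {} \<le> w \<and> w \<le> sum y {} + infsum y {0..}" if "0 \<le> w" "w \<le> S" for w
        using that R0 by (simp add: R_def)
    qed
    then obtain z Bs where z: "0 \<le> z" "z \<le> S" and Bs: "5 \<le> card Bs" "\<forall>B\<in>Bs. infsum y B = z"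
      by auto
    have "Bs \<subseteq> {C. infsum y C = z}" using Bs(2) by blast
    hence "card Bs \<le> card {C. infsum y C = z}" using valS[OF z] card_mono by blast
    moreover have "card {C. infsum y C = z} \<le> 4" using valS[OF z] by auto
    ultimately show False using Bs(1) by simp
  next
    case False
    then obtain M where M: "\<And>n. n \<ge> M \<Longrightarrow> \<not> y n < R (Suc n)" by auto
    have eqM: "y n = R (Suc n)" if "n \<ge> M" for n using M[OF that] kak[of n] by simp
    show False
    proof (cases "\<exists>n. y n < R (Suc n)")
      case False
      hence eq0: "\<And>n. n \<ge> 0 \<Longrightarrow> y n = infsum y {Suc n..}" using kak by (simp add: R_def not_less eq_iff)
      have yb: "y k = S * bb k" for k using geom_tail[where Mst = 0 and k = k, OF p eq0] R0 by (simp add: R_def)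
      have "{C. infsum y C = z4} = H (z4 / S)"
      proof -
        have "infsum y C = S * infsum bb C" for C
        proof -
          have yf: "y = (\<lambda>k. S * bb k)" by (rule ext) (rule yb)
          have "infsum y C = infsum (\<lambda>k. S * bb k) C" by (simp only: yf)
          thus ?thesis by (simp add: infsum_cmult_right')
        qed
        thus ?thesis using Spos by (auto simp: H_def field_simps)
      qed
      hence "card {C. infsum y C = z4} \<le> 2" using H_card by simp
      thus False using four(3) by simp
    next
      case True
      define SN where "SN = {n. y n < R (Suc n)}"
      have finSN: "finite SN"
      proof -
        have "SN \<subseteq> {..<M}"
        proof
          fix n assume "n \<in> SN"
          hence lt: "y n < R (Suc n)" by (simp add: SN_def)
          show "n \<in> {..<M}"
          proof (rule ccontr)
            assume "n \<notin> {..<M}"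
            hence "M \<le> n" by simp
            hence "y n = R (Suc n)" by (rule eqM)
            thus False using lt by simp
          qed
        qed
        thus ?thesis using finite_subset by blast
      qed
      define N where "N = Max SN"
      have SNne: "SN \<noteq> {}" using True by (simp add: SN_def)
      have NSN: "N \<in> SN" unfolding N_def by (rule Max_in[OF finSN SNne])
      have strictN: "y N < R (Suc N)" using NSN by (simp add: SN_def)
      have eqN: "\<And>n. n \<ge> Suc N \<Longrightarrow> y n = infsum y {Suc n..}"
      proof -
        fix n assume n: "n \<ge> Suc N"
        have "n \<notin> SN"
        proof
          assume "n \<in> SN"
          hence "n \<le> N" unfolding N_def by (rule Max_ge[OF finSN])
          thus False using n by simp
        qed
        thus "y n = infsum y {Suc n..}" using kak[of n] by (simp add: SN_def R_def)
      qed
      define c where "c = R (Suc N)"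
      have tail: "y (Suc N + k) = c * bb k" for k
        using geom_tail[where Mst = "Suc N" and k = k, OF p eqN] by (simp add: c_def R_def mult.commute)
      have cpos: "c > 0" using strictN ypos[of N] by (simp add: c_def)
      have cS: "c \<le> S" using Rmono[of 0 "Suc N"] R0 by (simp add: c_def)
      define I where "I = {i. i \<le> N \<and> y i = y N}"
      define m where "m = card I"
      have m1: "m \<ge> 1"
      proof -
        have "N \<in> I" by (simp add: I_def)
        moreover have "finite I" by (simp add: I_def)
        ultimately have "card I > 0" using card_gt_0_iff by blast
        thus ?thesis unfolding m_def by simp
      qed
      define D where "D = (\<lambda>i. y i - y N) ` {i. i \<le> N \<and> y i > y N}"
      define d where "d = Min (insert (y N) (insert (c - y N) D))"
      have finD: "finite D" by (simp add: D_def)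
      have dpos: "d > 0"
      proof -
        have "\<forall>t\<in>insert (y N) (insert (c - y N) D). t > 0"
          using ypos strictN by (auto simp: D_def c_def)
        moreover have "d \<in> insert (y N) (insert (c - y N) D)"
          unfolding d_def by (rule Min_in) (simp_all add: finD)
        ultimately show ?thesis by blast
      qed
      have dyN: "d \<le> y N" unfolding d_def by (rule Min_le) (simp_all add: finD)
      have dc: "d \<le> c - y N" unfolding d_def by (rule Min_le) (simp_all add: finD)
      have dgap: "y i - y N \<ge> d" if "i \<le> N" "y i > y N" for i
      proof -
        have "y i - y N \<in> D" using that by (auto simp: D_def)
        thus ?thesis unfolding d_def by (intro Min_le) (simp_all add: finD)
      qed
      have fz: "card {C. infsum y C = z} = uu (z / c) + m * uu ((z - y N) / c)"
        if "y N \<le> z" "z < y N + d" for z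
      proof -
        have "card {C. infsum y C = z} = (\<Sum>E\<in>Pow {..N}. card (H ((z - sum y E) / c)))"
          using count_card[OF p tail cpos] by blast
        also have "\<dots> = (\<Sum>E\<in>Pow {..N}. uu ((z - sum y E) / c))" by (simp add: uu_def)
        also have "\<dots> = uu (z / c) + m * uu ((z - y N) / c)"
          unfolding m_def I_def by (rule window_sum[OF p anti cpos dpos dyN dgap that])
        finally show ?thesis .
      qed
      have inS: "0 \<le> z \<and> z \<le> S" if "y N \<le> z" "z < y N + d" for z
        using that ypos[of N] dc cS by auto
      define t0 where "t0 = y N / c"
      define d' where "d' = d / c"
      have d'pos: "d' > 0" using dpos cpos by (simp add: d'_def)
      have t0pos: "t0 > 0" using ypos[of N] cpos by (simp add: t0_def)
      have t0d: "t0 + d' \<le> 1" using dc cpos by (simp add: t0_def d'_def field_simps)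
      have zs: "(y N + c * s) / c = t0 + s" "(y N + c * s - y N) / c = s" for s
        using cpos by (simp_all add: t0_def field_simps)
      have zin: "y N \<le> y N + c * s \<and> y N + c * s < y N + d" if "0 \<le> s" "s < d'" for s
      proof -
        have "c * s < c * d'" using that cpos by simp
        also have "c * d' = d" using cpos by (simp add: d'_def)
        finally show ?thesis using that cpos by simp
      qed
      have val: "uu (t0 + s) + m * uu s \<in> {1, 2, 4}" if "0 \<le> s" "s < d'" for s
      proof -
        have "card {C. infsum y C = y N + c * s} = uu (t0 + s) + m * uu s"
          using fz[of "y N + c * s"] zin[OF that] zs[of s] by simp
        thus ?thesis using valS inS zin[OF that] by metis
      qed
      show False
      proof (cases "dy t0")
        case True
        have t01: "t0 < 1" using t0d d'pos by simp
        have u0: "uu t0 = 2" unfolding uu_def by (rule H_two[OF True t0pos t01])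
        have "uu (t0 + 0) + m * uu 0 \<in> {1, 2, 4}" using val[of 0] d'pos by simp
        hence v1: "2 + m \<in> {1, 2, 4}" using u0 uu_0 by simp
        obtain s where s: "0 < s" "s < d'" "\<not> dy s" using nondy_exists[OF d'pos] by blast
        have nd: "\<not> dy (t0 + s)"
        proof
          assume "dy (t0 + s)"
          hence "dy ((t0 + s) - t0)" by (rule dy_sub[OF True]) (use s(1) in simp)
          thus False using s(3) by simp
        qed
        have us: "uu s = 1" unfolding uu_def by (rule H_one) (use s t0d t0pos in auto)
        have ut: "uu (t0 + s) = 1" unfolding uu_def by (rule H_one) (use s t0d t0pos nd in auto)
        have v2: "1 + m \<in> {1, 2, 4}" using val[of s] s us ut by simp
        show False using v1 v2 m1 by auto
      next
        case False
        obtain s where s: "0 < s" "s < d'" "s < 1" "dy s" using dy_small[OF d'pos] by blast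
        have us: "uu s = 2" unfolding uu_def by (rule H_two) (use s in auto)
        have nd: "\<not> dy (t0 + s)"
        proof
          assume "dy (t0 + s)"
          hence "dy ((t0 + s) - s)" by (rule dy_sub[OF s(4)]) (use t0pos in simp)
          thus False using False by simp
        qed
        have ut: "uu (t0 + s) = 1" unfolding uu_def by (rule H_one) (use s t0d t0pos nd in auto)
        have "1 + m * 2 \<in> {1, 2, 4}" using val[of s] s us ut by simp
        hence "1 + m * 2 = 1 \<or> 1 + m * 2 = 2 \<or> 1 + m * 2 = 4" by simp
        thus False using m1 by presburger
      qed
    qed
  qed
qed


lemma cardval_CFin: "cardval S = CFin k \<Longrightarrow> finite S \<and> card S = k"
  unfolding cardval_def by (auto split: if_splits)

lemma partB: "{CFin 1, CFin 2, CFin 4} \<notin> family_I1"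
proof
  assume "{CFin 1, CFin 2, CFin 4} \<in> family_I1"
  hence "\<exists>x. {CFin 1, CFin 2, CFin 4} = cf_range x \<and> admissible_seq x \<and>
           (\<exists>a b. a < b \<and> achievement_set x = {a..b})"
    unfolding family_I1_def by (simp only: mem_Collect_eq)
  then obtain x where hx: "{CFin 1, CFin 2, CFin 4} = cf_range x \<and> admissible_seq x \<and>
           (\<exists>a b. a < b \<and> achievement_set x = {a..b})" by (rule exE)
  have r: "cf_range x = {CFin 1, CFin 2, CFin 4}" using hx by simp
  have adm: "admissible_seq x" using hx by simp
  have "\<exists>a b. a < b \<and> achievement_set x = {a..b}" using hx by simp
  then obtain a b where ab: "a < b" "achievement_set x = {a..b}" by blast
  have px: "pss x" using adm by (simp add: admissible_seq_def pss_def)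
  have lim: "x \<longlonglongrightarrow> 0" using adm by (simp add: admissible_seq_def summable_LIMSEQ_zero)
  have pos: "\<And>n. x n > 0" using px by (simp add: pss_def)
  obtain \<sigma> :: "nat \<Rightarrow> nat" where sbm: "bij \<sigma> \<and> (\<forall>a b. a \<le> b \<longrightarrow> x (\<sigma> b) \<le> x (\<sigma> a))"
    using sort_exists[OF pos lim] by (rule exE)
  have sb: "bij \<sigma>" using sbm by (rule conjunct1)
  have sm: "\<forall>a b. a \<le> b \<longrightarrow> x (\<sigma> b) \<le> x (\<sigma> a)" using sbm by (rule conjunct2)
  define y where "y = (\<lambda>n. x (\<sigma> n))"
  have inj: "inj \<sigma>" using sb by (rule bij_is_inj)
  have surj: "surj \<sigma>" using sb by (rule bij_is_surj)
  have "x summable_on UNIV" by (rule pss_summable_on[OF px])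
  hence "y summable_on UNIV" unfolding y_def using summable_on_reindex_bij_betw[OF sb, of x] by simp
  hence "summable y" using summable_on_UNIV_nonneg_real_iff[of y] px
    by (simp add: y_def pss_def less_imp_le)
  hence py: "pss y" using px by (simp add: pss_def y_def)
  have anti: "\<And>a b. a \<le> b \<Longrightarrow> y b \<le> y a" using sm by (simp add: y_def)
  have reidx: "infsum x (\<sigma> ` C) = infsum y C" for C
    using infsum_reindex[of \<sigma> C x] inj by (simp add: y_def o_def inj_on_subset)
  have bij_rep: "bij_betw (\<lambda>C. \<sigma> ` C) {C. infsum y C = z} {A. infsum x A = z}" for z
  proof (rule bij_betwI')
    fix C D assume "C \<in> {C. infsum y C = z}" "D \<in> {C. infsum y C = z}"
    show "(\<sigma> ` C = \<sigma> ` D) = (C = D)" using inj by (simp add: inj_image_eq_iff)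
  next
    fix C assume "C \<in> {C. infsum y C = z}"
    thus "\<sigma> ` C \<in> {A. infsum x A = z}" using reidx by simp
  next
    fix A assume A: "A \<in> {A. infsum x A = z}"
    have e: "\<sigma> ` (\<sigma> -` A) = A" using surj by (simp add: surj_image_vimage_eq)
    hence "infsum y (\<sigma> -` A) = z" using reidx[of "\<sigma> -` A"] A by simp
    thus "\<exists>C\<in>{C. infsum y C = z}. A = \<sigma> ` C" using e by blast
  qed
  have cf: "cardinal_function x z = cardval {A. infsum x A = z}" for z
    unfolding cardinal_function_def using subsum_infsum[OF px] by simp
  have achx: "achievement_set x = {z. \<exists>A. infsum x A = z}"
    unfolding achievement_set_def subsum_infsum[OF px] by blast
  have ach: "(\<exists>C. infsum y C = z) \<longleftrightarrow> a \<le> z \<and> z \<le> b" for z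
  proof -
    have "(\<exists>C. infsum y C = z) \<longleftrightarrow> (\<exists>A. infsum x A = z)"
    proof
      assume "\<exists>C. infsum y C = z"
      then obtain C where "infsum y C = z" by blast
      thus "\<exists>A. infsum x A = z" using reidx by metis
    next
      assume "\<exists>A. infsum x A = z"
      then obtain A where "infsum x A = z" by blast
      have "A \<in> {A. infsum x A = z}" using \<open>infsum x A = z\<close> by simp
      then obtain C where "C \<in> {C. infsum y C = z}" using bij_betw_imp_surj_on[OF bij_rep[of z]] by blast
      thus "\<exists>C. infsum y C = z" by blast
    qed
    also have "\<dots> \<longleftrightarrow> z \<in> achievement_set x" unfolding achx by simp
    also have "\<dots> \<longleftrightarrow> a \<le> z \<and> z \<le> b" unfolding ab(2) by simp
    finally show ?thesis .
  qed
  have transfer: "finite {C. infsum y C = z} \<and> card {C. infsum y C = z} = k"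
    if "cardinal_function x z = CFin k" for z k
  proof -
    have "finite {A. infsum x A = z} \<and> card {A. infsum x A = z} = k"
      using cardval_CFin[of "{A. infsum x A = z}" k] that cf[of z] by simp
    thus ?thesis using bij_betw_finite[OF bij_rep[of z]] bij_betw_same_card[OF bij_rep[of z]] by simp
  qed
  have vals: "finite {C. infsum y C = z} \<and> card {C. infsum y C = z} \<in> {1, 2, 4}"
    if "a \<le> z" "z \<le> b" for z
  proof -
    have "z \<in> achievement_set x" using ab(2) that by simp
    hence "cardinal_function x z \<in> cf_range x" unfolding cf_range_def by (rule imageI)
    hence "cardinal_function x z \<in> {CFin 1, CFin 2, CFin 4}" using r by simp
    then obtain k where k: "cardinal_function x z = CFin k" "k \<in> {1, 2, 4}" by auto
    show ?thesis using transfer[OF k(1)] k(2) by simp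
  qed
  have "CFin 4 \<in> cf_range x" using r by simp
  then obtain z4 where z4: "z4 \<in> achievement_set x" "CFin 4 = cardinal_function x z4"
    unfolding cf_range_def by (rule imageE)
  have z4ab: "a \<le> z4" "z4 \<le> b" using z4(1) ab(2) by auto
  have "card {C. infsum y C = z4} = 4" using transfer[OF z4(2)[symmetric]] by simp
  note c4 = this
  show False using core[OF py anti ach vals z4ab(1) z4ab(2) c4] .
qed

theorem theorem6p9:
  shows "{CFin 1, CFin 2, CFin 4} \<in> family_I - family_I1"
  using partA partB by (rule DiffI)


end
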